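(* Let $\mathcal{A}^*$ be a graded-commutative differential graded algebra over a field of characteristic zero, let $\mathcal{N}^*$ be a formal DG-module over $\mathcal{A}^*$, and let $\alpha\in H^1(\mathcal{A}^* )$. Then the deformation spectral sequence $\mathcal{F}^*_r(\mathcal{N}^*,\alpha)$ degenerates at its second term.
   Context: A DG-module $\mathcal{N}^*$ over $\mathcal{A}^*$ is a graded $\mathcal{A}^*$-module with a differential satisfying the Leibniz rule. It is called formal if it is a direct summand of a formal DGA $\mathcal{B}^*$ over $\mathcal{A}^*$ (a DGA which is also a DG-module over $\mathcal{A}^*$, compatibly), that is $\mathcal{B}^*=\mathcal{N}^*\oplus\mathcal{K}^*$ with $\mathcal{N}^*,\mathcal{K}^*$ DG-submodules of $\mathcal{B}^*$; a DGA is formal if it has the same minimal model as its cohomology algebra. Deformation spectral sequence: for $\alpha=[\xi]$, $\xi\in\mathcal{A}^1$ a cocycle, endow $\mathcal{N}^*[[t]]$ (formal power series over $\mathcal{N}^*$) with $D_tx=dx+t\xi x$; the sequence $0\to\mathcal{N}^*[[t]]\xrightarrow{t}\mathcal{N}^*[[t]]\xrightarrow{\pi}\mathcal{N}^*\to0$ ($\pi$: $t\mapsto0$) gives an exact couple with $D=H^*(\mathcal{N}^*[[t]],D_t)$, $E=H^*(\mathcal{N}^* )$; $\mathcal{F}^*_r(\mathcal{N}^*,\alpha)$ is its spectral sequence. Degenerating at the second term means $d_r=0$ for all $r\ge2$. *)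

theory Defs
  imports Main "HOL.Modules"
begin

text \<open>A graded object is a family of subspaces X p (p an integer degree) of an
ambient vector space (a type with a scalar multiplication).  Different pieces meet only in 0.  All axioms are imposed only on
homogeneous elements.\<close>

record ('k, 'a) dga_rec =
  gcar :: "int \<Rightarrow> 'a set"
  scl  :: "'k \<Rightarrow> 'a \<Rightarrow> 'a"
  mul  :: "'a \<Rightarrow> 'a \<Rightarrow> 'a"
  one  :: "'a"
  dif  :: "'a \<Rightarrow> 'a"

definition ksign :: "int \<Rightarrow> 'k::field" where
  "ksign n = (if even n then 1 else -1)"

definition graded_space :: "('k::field \<Rightarrow> 'a::ab_group_add \<Rightarrow> 'a) \<Rightarrow> (int \<Rightarrow> 'a set) \<Rightarrow> bool" where
  "graded_space s X \<longleftrightarrow>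
     module s \<and> (\<forall>p. module.subspace s (X p)) \<and> (\<forall>p<0. X p = {0}) \<and>
     (\<forall>p q. p \<noteq> q \<longrightarrow> X p \<inter> X q \<subseteq> {0})"

definition exact_in :: "('k, 'a) dga_rec \<Rightarrow> int \<Rightarrow> 'a \<Rightarrow> bool" where
  "exact_in A p z \<longleftrightarrow> (\<exists>u \<in> gcar A (p - 1). z = dif A u)"

definition is_dga :: "('k::field, 'a::ab_group_add) dga_rec \<Rightarrow> bool" where
  "is_dga A \<longleftrightarrow>
     graded_space (scl A) (gcar A) \<and>
     one A \<in> gcar A 0 \<and>
     (\<forall>p q. \<forall>x \<in> gcar A p. \<forall>y \<in> gcar A q. mul A x y \<in> gcar A (p + q)) \<and>
     (\<forall>p q. \<forall>x \<in> gcar A p. \<forall>x' \<in> gcar A p. \<forall>y \<in> gcar A q.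
        mul A (x + x') y = mul A x y + mul A x' y \<and> mul A y (x + x') = mul A y x + mul A y x') \<and>
     (\<forall>p q c. \<forall>x \<in> gcar A p. \<forall>y \<in> gcar A q.
        mul A (scl A c x) y = scl A c (mul A x y) \<and> mul A x (scl A c y) = scl A c (mul A x y)) \<and>
     (\<forall>p q r. \<forall>x \<in> gcar A p. \<forall>y \<in> gcar A q. \<forall>z \<in> gcar A r.
        mul A (mul A x y) z = mul A x (mul A y z)) \<and>
     (\<forall>p. \<forall>x \<in> gcar A p. mul A (one A) x = x \<and> mul A x (one A) = x) \<and>
     (\<forall>p. \<forall>x \<in> gcar A p. dif A x \<in> gcar A (p + 1)) \<and>
     (\<forall>p c. \<forall>x \<in> gcar A p. \<forall>y \<in> gcar A p.
        dif A (x + y) = dif A x + dif A y \<and> dif A (scl A c x) = scl A c (dif A x)) \<and>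
     (\<forall>p. \<forall>x \<in> gcar A p. dif A (dif A x) = 0) \<and>
     (\<forall>p q. \<forall>x \<in> gcar A p. \<forall>y \<in> gcar A q.
        dif A (mul A x y) = mul A (dif A x) y + scl A (ksign p) (mul A x (dif A y)))"

definition is_cdga :: "('k::field, 'a::ab_group_add) dga_rec \<Rightarrow> bool" where
  "is_cdga A \<longleftrightarrow> is_dga A \<and>
     (\<forall>p q. \<forall>x \<in> gcar A p. \<forall>y \<in> gcar A q. mul A x y = scl A (ksign (p * q)) (mul A y x))"

definition dg_module_over ::
  "('k::field, 'a::ab_group_add) dga_rec \<Rightarrow> ('k \<Rightarrow> 'b::ab_group_add \<Rightarrow> 'b) \<Rightarrow> ('b \<Rightarrow> 'b)
     \<Rightarrow> (int \<Rightarrow> 'b set) \<Rightarrow> ('a \<Rightarrow> 'b \<Rightarrow> 'b) \<Rightarrow> bool" where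
  "dg_module_over A s d X act \<longleftrightarrow>
     graded_space s X \<and>
     (\<forall>p. \<forall>x \<in> X p. d x \<in> X (p + 1)) \<and>
     (\<forall>p c. \<forall>x \<in> X p. \<forall>y \<in> X p. d (x + y) = d x + d y \<and> d (s c x) = s c (d x)) \<and>
     (\<forall>p. \<forall>x \<in> X p. d (d x) = 0) \<and>
     (\<forall>p q. \<forall>a \<in> gcar A p. \<forall>x \<in> X q. act a x \<in> X (p + q)) \<and>
     (\<forall>p q c. \<forall>a \<in> gcar A p. \<forall>a' \<in> gcar A p. \<forall>x \<in> X q. \<forall>x' \<in> X q.
        act (a + a') x = act a x + act a' x \<and> act a (x + x') = act a x + act a x' \<and>
        act (scl A c a) x = s c (act a x) \<and> act a (s c x) = s c (act a x)) \<and>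
     (\<forall>p p' q. \<forall>a \<in> gcar A p. \<forall>a' \<in> gcar A p'. \<forall>x \<in> X q.
        act (mul A a a') x = act a (act a' x)) \<and>
     (\<forall>q. \<forall>x \<in> X q. act (one A) x = x) \<and>
     (\<forall>p q. \<forall>a \<in> gcar A p. \<forall>x \<in> X q.
        d (act a x) = act (dif A a) x + s (ksign p) (act a (d x)))"

definition dga_over ::
  "('k::field, 'a::ab_group_add) dga_rec \<Rightarrow> ('k, 'b::ab_group_add) dga_rec \<Rightarrow> ('a \<Rightarrow> 'b \<Rightarrow> 'b) \<Rightarrow> bool" where
  "dga_over A B act \<longleftrightarrow> is_dga B \<and> dg_module_over A (scl B) (dif B) (gcar B) act \<and>
     (\<forall>p q r. \<forall>a \<in> gcar A p. \<forall>x \<in> gcar B q. \<forall>y \<in> gcar B r.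
        act a (mul B x y) = mul B (act a x) y)"

definition dg_submodule ::
  "('k::field, 'a::ab_group_add) dga_rec \<Rightarrow> ('k, 'b::ab_group_add) dga_rec \<Rightarrow> ('a \<Rightarrow> 'b \<Rightarrow> 'b)
     \<Rightarrow> (int \<Rightarrow> 'b set) \<Rightarrow> bool" where
  "dg_submodule A B act N \<longleftrightarrow>
     (\<forall>p. N p \<subseteq> gcar B p \<and> module.subspace (scl B) (N p)) \<and>
     (\<forall>p. \<forall>x \<in> N p. dif B x \<in> N (p + 1)) \<and>
     (\<forall>p q. \<forall>a \<in> gcar A p. \<forall>x \<in> N q. act a x \<in> N (p + q))"

definition hdeg :: "('k, 'a::zero) dga_rec \<Rightarrow> 'a \<Rightarrow> int" where
  "hdeg M v = (THE p. v \<in> gcar M p)"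

text \<open>Admissible monomials in a well-ordered homogeneous basis S of V:
non-decreasing words, odd generators not repeated.\<close>
definition adm_word :: "('k, 'a::zero) dga_rec \<Rightarrow> 'a set \<Rightarrow> ('a \<Rightarrow> 'a \<Rightarrow> bool) \<Rightarrow> 'a list \<Rightarrow> bool" where
  "adm_word M S lt ws \<longleftrightarrow> set ws \<subseteq> S \<and>
     sorted_wrt (\<lambda>a b. lt a b \<or> (a = b \<and> even (hdeg M a))) ws"

definition mono_val :: "('k, 'a) dga_rec \<Rightarrow> 'a list \<Rightarrow> 'a" where
  "mono_val M ws = foldr (mul M) ws (one M)"

text \<open>M is a minimal Sullivan algebra (Lambda V, d): free graded-commutative on
V = span S with S a well-ordered homogeneous basis in positive degrees, such that
d v lies in Lambda(V_{<v}) (Sullivan condition) and in Lambda^{\<ge>2} V (minimality).\<close>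
definition minimal_sullivan :: "('k::field, 'a::ab_group_add) dga_rec \<Rightarrow> bool" where
  "minimal_sullivan M \<longleftrightarrow> is_cdga M \<and>
     (\<exists>S lt.
        (\<forall>v \<in> S. v \<noteq> 0 \<and> (\<exists>p\<ge>1. v \<in> gcar M p)) \<and>
        (\<forall>a \<in> S. \<not> lt a a) \<and>
        (\<forall>a \<in> S. \<forall>b \<in> S. \<forall>c \<in> S. lt a b \<longrightarrow> lt b c \<longrightarrow> lt a c) \<and>
        (\<forall>a \<in> S. \<forall>b \<in> S. a = b \<or> lt a b \<or> lt b a) \<and>
        wf {(a, b). a \<in> S \<and> b \<in> S \<and> lt a b} \<and>
        inj_on (mono_val M) {ws. adm_word M S lt ws} \<and>
        \<not> module.dependent (scl M) (mono_val M ` {ws. adm_word M S lt ws}) \<and>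
        (\<forall>p. gcar M p \<subseteq> module.span (scl M) (mono_val M ` {ws. adm_word M S lt ws})) \<and>
        (\<forall>v \<in> S. dif M v \<in> module.span (scl M)
            (mono_val M ` {ws. adm_word M S lt ws \<and> (\<forall>u \<in> set ws. lt u v)})) \<and>
        (\<forall>v \<in> S. dif M v \<in> module.span (scl M)
            (mono_val M ` {ws. adm_word M S lt ws \<and> 2 \<le> length ws})))"

definition quasi_iso :: "('k::field, 'm::ab_group_add) dga_rec \<Rightarrow> ('k, 'b::ab_group_add) dga_rec \<Rightarrow> ('m \<Rightarrow> 'b) \<Rightarrow> bool" where
  "quasi_iso M B f \<longleftrightarrow>
     (\<forall>p. \<forall>x \<in> gcar M p. f x \<in> gcar B p) \<and>
     (\<forall>p c. \<forall>x \<in> gcar M p. \<forall>y \<in> gcar M p. f (x + y) = f x + f y \<and> f (scl M c x) = scl B c (f x)) \<and>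
     (\<forall>p q. \<forall>x \<in> gcar M p. \<forall>y \<in> gcar M q. f (mul M x y) = mul B (f x) (f y)) \<and>
     f (one M) = one B \<and>
     (\<forall>p. \<forall>x \<in> gcar M p. f (dif M x) = dif B (f x)) \<and>
     (\<forall>p. \<forall>z \<in> gcar M p. dif M z = 0 \<longrightarrow> exact_in B p (f z) \<longrightarrow> exact_in M p z) \<and>
     (\<forall>p. \<forall>w \<in> gcar B p. dif B w = 0 \<longrightarrow>
        (\<exists>z \<in> gcar M p. dif M z = 0 \<and> exact_in B p (f z - w)))"

text \<open>A class in H^p(B) is represented by a
cocycle of B of degree p; g assigns to each homogeneous element of M a representative of its
image class, so all identities hold modulo exact elements.\<close>
definition quasi_iso_to_coh :: "('k::field, 'm::ab_group_add) dga_rec \<Rightarrow> ('k, 'b::ab_group_add) dga_rec \<Rightarrow> ('m \<Rightarrow> 'b) \<Rightarrow> bool" where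
  "quasi_iso_to_coh M B g \<longleftrightarrow>
     (\<forall>p. \<forall>x \<in> gcar M p. g x \<in> gcar B p \<and> dif B (g x) = 0) \<and>
     (\<forall>p c. \<forall>x \<in> gcar M p. \<forall>y \<in> gcar M p.
        exact_in B p (g (x + y) - (g x + g y)) \<and> exact_in B p (g (scl M c x) - scl B c (g x))) \<and>
     (\<forall>p q. \<forall>x \<in> gcar M p. \<forall>y \<in> gcar M q. exact_in B (p + q) (g (mul M x y) - mul B (g x) (g y))) \<and>
     exact_in B 0 (g (one M) - one B) \<and>
     (\<forall>p. \<forall>x \<in> gcar M p. exact_in B (p + 1) (g (dif M x))) \<and>
     (\<forall>p. \<forall>z \<in> gcar M p. dif M z = 0 \<longrightarrow> exact_in B p (g z) \<longrightarrow> exact_in M p z) \<and>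
     (\<forall>p. \<forall>w \<in> gcar B p. dif B w = 0 \<longrightarrow>
        (\<exists>z \<in> gcar M p. dif M z = 0 \<and> exact_in B p (g z - w)))"

text \<open>B is formal: B and its cohomology algebra have the same minimal model, i.e. there is a
minimal Sullivan algebra M (carried by the type 'm) with quasi-isomorphisms M \<rightarrow> B and
M \<rightarrow> H(B).\<close>
definition formal_dga :: "'m::ab_group_add itself \<Rightarrow> ('k::field, 'b::ab_group_add) dga_rec \<Rightarrow> bool" where
  "formal_dga _ B \<longleftrightarrow> (\<exists>(M :: ('k, 'm) dga_rec) f g.
      minimal_sullivan M \<and> quasi_iso M B f \<and> quasi_iso_to_coh M B g)"

text \<open>N[[t]] in degree p: formal power series (coefficient sequences) with coefficients in N^p.\<close>
definition pser :: "(int \<Rightarrow> 'b set) \<Rightarrow> int \<Rightarrow> (nat \<Rightarrow> 'b) set" where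
  "pser N p = {s. \<forall>n. s n \<in> N p}"

text \<open>D_t s = d s + t \<xi> s.\<close>
definition Dt :: "('b::ab_group_add \<Rightarrow> 'b) \<Rightarrow> ('a \<Rightarrow> 'b \<Rightarrow> 'b) \<Rightarrow> 'a \<Rightarrow> (nat \<Rightarrow> 'b) \<Rightarrow> (nat \<Rightarrow> 'b)" where
  "Dt d act xi s = (\<lambda>n. d (s n) + (if n = 0 then 0 else act xi (s (n - 1))))"

definition tpow :: "nat \<Rightarrow> (nat \<Rightarrow> 'b::zero) \<Rightarrow> (nat \<Rightarrow> 'b)" where
  "tpow m s = (\<lambda>n. if n < m then 0 else s (n - m))"

definition pconst :: "'b::zero \<Rightarrow> (nat \<Rightarrow> 'b)" where
  "pconst x = (\<lambda>n. if n = 0 then x else 0)"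

text \<open>Exact couple: D = H(N[[t]], D_t), E = H(N), i = t, j = \<pi>_* and k the connecting map,
k[x] = [\<xi> x].  The r-th differential d_r is defined on
E_r = k^{-1}(im i^{r-1}) / j(ker i^{r-1}) by d_r[x] = j(y) where i^{r-1}(y) = k[x].
The following says d_r = 0 for all r \<ge> 2, written on representatives:
for a cocycle x of N^p and a D_t-cocycle y of N[[t]]^{p+1} with i^{r-1}[y] = k[x],
the class j[y] = [y_0] lies in j(ker i^{r-1}).\<close>
definition defo_ss_degenerates_at_2 ::
  "('b::ab_group_add \<Rightarrow> 'b) \<Rightarrow> ('a \<Rightarrow> 'b \<Rightarrow> 'b) \<Rightarrow> (int \<Rightarrow> 'b set) \<Rightarrow> 'a \<Rightarrow> bool" where
  "defo_ss_degenerates_at_2 d act N xi \<longleftrightarrow>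
     (\<forall>r::nat. r \<ge> 2 \<longrightarrow> (\<forall>p. \<forall>x \<in> N p. \<forall>y \<in> pser N (p + 1).
        d x = 0 \<longrightarrow> Dt d act xi y = (\<lambda>_. 0) \<longrightarrow>
        (\<exists>u \<in> pser N p. tpow (r - 1) y - pconst (act xi x) = Dt d act xi u) \<longrightarrow>
        (\<exists>w \<in> pser N (p + 1). Dt d act xi w = (\<lambda>_. 0) \<and>
           (\<exists>u \<in> pser N p. tpow (r - 1) w = Dt d act xi u) \<and>
           (\<exists>v \<in> N p. y 0 - w 0 = d v))))"

end

theory Submission
  imports Defs
begin



lemma ksign0[simp]: "ksign 0 = 1" by (simp add: ksign_def)
lemma ksign1[simp]: "ksign 1 = -1" by (simp add: ksign_def)

locale dgl =
  fixes A :: "('k::field, 'a::ab_group_add) dga_rec"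
  assumes dga: "is_dga A"
begin

lemma md: "module (scl A)" using dga by (simp add: is_dga_def graded_space_def)
lemma sub: "module.subspace (scl A) (gcar A p)" using dga by (simp add: is_dga_def graded_space_def)

lemma zero_in[simp, intro]: "0 \<in> gcar A p" using module.subspace_0[OF md sub] .
lemma add_in[intro]: "x \<in> gcar A p \<Longrightarrow> y \<in> gcar A p \<Longrightarrow> x + y \<in> gcar A p"
  using module.subspace_add[OF md sub] .
lemma neg_in[intro]: "x \<in> gcar A p \<Longrightarrow> - x \<in> gcar A p"
  using module.subspace_neg[OF md sub] .
lemma diff_in[intro]: "x \<in> gcar A p \<Longrightarrow> y \<in> gcar A p \<Longrightarrow> x - y \<in> gcar A p"
  using module.subspace_diff[OF md sub] .
lemma scl_in[intro]: "x \<in> gcar A p \<Longrightarrow> scl A c x \<in> gcar A p"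
  using module.subspace_scale[OF md sub] .
lemma sum_in[intro]: "(\<And>i. i \<in> I \<Longrightarrow> h i \<in> gcar A p) \<Longrightarrow> sum h I \<in> gcar A p"
  using module.subspace_sum[OF md sub] .

lemma one_in[simp, intro]: "one A \<in> gcar A 0" using dga by (simp add: is_dga_def)
lemma mul_in[intro]: "x \<in> gcar A p \<Longrightarrow> y \<in> gcar A q \<Longrightarrow> mul A x y \<in> gcar A (p + q)"
proof -
  have "\<forall>p q. \<forall>x \<in> gcar A p. \<forall>y \<in> gcar A q. mul A x y \<in> gcar A (p + q)"
    using dga unfolding is_dga_def by (elim conjE) assumption
  thus "x \<in> gcar A p \<Longrightarrow> y \<in> gcar A q \<Longrightarrow> ?thesis" by blast
qed
lemma mul_in'[intro]: "x \<in> gcar A p \<Longrightarrow> y \<in> gcar A q \<Longrightarrow> r = p + q \<Longrightarrow> mul A x y \<in> gcar A r"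
  using mul_in by blast
lemma d_in[intro]: "x \<in> gcar A p \<Longrightarrow> dif A x \<in> gcar A (p + 1)"
proof -
  have "\<forall>p. \<forall>x \<in> gcar A p. dif A x \<in> gcar A (p + 1)"
    using dga unfolding is_dga_def by (elim conjE) assumption
  thus "x \<in> gcar A p \<Longrightarrow> ?thesis" by blast
qed
lemma d_in'[intro]: "x \<in> gcar A p \<Longrightarrow> q = p + 1 \<Longrightarrow> dif A x \<in> gcar A q"
  using d_in by blast

lemma mul_add: "x \<in> gcar A p \<Longrightarrow> x' \<in> gcar A p \<Longrightarrow> y \<in> gcar A q \<Longrightarrow> mul A (x + x') y = mul A x y + mul A x' y \<and> mul A y (x + x') = mul A y x + mul A y x'"
proof -
  have "\<forall>p q. \<forall>x\<in>gcar A p. \<forall>x'\<in>gcar A p. \<forall>y\<in>gcar A q.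
        mul A (x + x') y = mul A x y + mul A x' y \<and> mul A y (x + x') = mul A y x + mul A y x'"
    using dga unfolding is_dga_def by (elim conjE) assumption
  thus "x \<in> gcar A p \<Longrightarrow> x' \<in> gcar A p \<Longrightarrow> y \<in> gcar A q \<Longrightarrow> ?thesis" by blast
qed
lemma mul_add_l: "x \<in> gcar A p \<Longrightarrow> x' \<in> gcar A p \<Longrightarrow> y \<in> gcar A q \<Longrightarrow> mul A (x + x') y = mul A x y + mul A x' y"
  using mul_add by blast
lemma mul_add_r: "x \<in> gcar A p \<Longrightarrow> x' \<in> gcar A p \<Longrightarrow> y \<in> gcar A q \<Longrightarrow> mul A y (x + x') = mul A y x + mul A y x'"
  using mul_add by blast
lemma mul_scl: "x \<in> gcar A p \<Longrightarrow> y \<in> gcar A q \<Longrightarrow> mul A (scl A c x) y = scl A c (mul A x y) \<and> mul A x (scl A c y) = scl A c (mul A x y)"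
proof -
  have "\<forall>p q c. \<forall>x\<in>gcar A p. \<forall>y\<in>gcar A q.
        mul A (scl A c x) y = scl A c (mul A x y) \<and> mul A x (scl A c y) = scl A c (mul A x y)"
    using dga unfolding is_dga_def by (elim conjE) assumption
  thus "x \<in> gcar A p \<Longrightarrow> y \<in> gcar A q \<Longrightarrow> ?thesis" by blast
qed
lemma mul_scl_l: "x \<in> gcar A p \<Longrightarrow> y \<in> gcar A q \<Longrightarrow> mul A (scl A c x) y = scl A c (mul A x y)"
  using mul_scl by blast
lemma mul_scl_r: "x \<in> gcar A p \<Longrightarrow> y \<in> gcar A q \<Longrightarrow> mul A x (scl A c y) = scl A c (mul A x y)"
  using mul_scl by blast
lemma assoc: "x \<in> gcar A p \<Longrightarrow> y \<in> gcar A q \<Longrightarrow> z \<in> gcar A r \<Longrightarrow> mul A (mul A x y) z = mul A x (mul A y z)"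
proof -
  have "\<forall>p q r. \<forall>x \<in> gcar A p. \<forall>y \<in> gcar A q. \<forall>z \<in> gcar A r. mul A (mul A x y) z = mul A x (mul A y z)"
    using dga unfolding is_dga_def by (elim conjE) assumption
  thus "x \<in> gcar A p \<Longrightarrow> y \<in> gcar A q \<Longrightarrow> z \<in> gcar A r \<Longrightarrow> ?thesis" by blast
qed
lemma one_l: "x \<in> gcar A p \<Longrightarrow> mul A (one A) x = x"
proof -
  have "\<forall>p. \<forall>x \<in> gcar A p. mul A (one A) x = x \<and> mul A x (one A) = x"
    using dga unfolding is_dga_def by (elim conjE) assumption
  thus "x \<in> gcar A p \<Longrightarrow> ?thesis" by blast
qed
lemma one_r: "x \<in> gcar A p \<Longrightarrow> mul A x (one A) = x"
proof -
  have "\<forall>p. \<forall>x \<in> gcar A p. mul A (one A) x = x \<and> mul A x (one A) = x"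
    using dga unfolding is_dga_def by (elim conjE) assumption
  thus "x \<in> gcar A p \<Longrightarrow> ?thesis" by blast
qed
lemma d_add: "x \<in> gcar A p \<Longrightarrow> y \<in> gcar A p \<Longrightarrow> dif A (x + y) = dif A x + dif A y"
proof -
  have "\<forall>p c. \<forall>x \<in> gcar A p. \<forall>y \<in> gcar A p. dif A (x + y) = dif A x + dif A y \<and> dif A (scl A c x) = scl A c (dif A x)"
    using dga unfolding is_dga_def by (elim conjE) assumption
  thus "x \<in> gcar A p \<Longrightarrow> y \<in> gcar A p \<Longrightarrow> ?thesis" by blast
qed
lemma d_scl: "x \<in> gcar A p \<Longrightarrow> dif A (scl A c x) = scl A c (dif A x)"
proof -
  have "\<forall>p c. \<forall>x \<in> gcar A p. \<forall>y \<in> gcar A p. dif A (x + y) = dif A x + dif A y \<and> dif A (scl A c x) = scl A c (dif A x)"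
    using dga unfolding is_dga_def by (elim conjE) assumption
  thus "x \<in> gcar A p \<Longrightarrow> ?thesis" by blast
qed
lemma dd: "x \<in> gcar A p \<Longrightarrow> dif A (dif A x) = 0"
proof -
  have "\<forall>p. \<forall>x \<in> gcar A p. dif A (dif A x) = 0"
    using dga unfolding is_dga_def by (elim conjE) assumption
  thus "x \<in> gcar A p \<Longrightarrow> ?thesis" by blast
qed
lemma leib: "x \<in> gcar A p \<Longrightarrow> y \<in> gcar A q \<Longrightarrow>
   dif A (mul A x y) = mul A (dif A x) y + scl A (ksign p) (mul A x (dif A y))"
proof -
  have "\<forall>p q. \<forall>x \<in> gcar A p. \<forall>y \<in> gcar A q. dif A (mul A x y) = mul A (dif A x) y + scl A (ksign p) (mul A x (dif A y))"
    using dga unfolding is_dga_def by (elim conjE) assumption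
  thus "x \<in> gcar A p \<Longrightarrow> y \<in> gcar A q \<Longrightarrow> ?thesis" by blast
qed

lemma scl_neg1: "scl A (-1) v = - v" using module.scale_minus_left[OF md, of 1] module.scale_one[OF md] by simp
lemma scl_one: "scl A 1 v = v" using module.scale_one[OF md] .
lemma scl_zero_r: "scl A c 0 = 0" using module.scale_zero_right[OF md] .

lemma d_zero[simp]: "dif A 0 = 0"
proof -
  have "dif A (0 + 0) = dif A 0 + dif A 0" by (rule d_add[of 0 0]) auto
  thus ?thesis by simp
qed
lemma d_neg: "x \<in> gcar A p \<Longrightarrow> dif A (- x) = - dif A x"
proof -
  assume x: "x \<in> gcar A p"
  have "dif A (x + - x) = dif A x + dif A (- x)" using x by (intro d_add) auto
  thus ?thesis by (simp add: eq_neg_iff_add_eq_0 add.commute)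
qed
lemma d_diff: "x \<in> gcar A p \<Longrightarrow> y \<in> gcar A p \<Longrightarrow> dif A (x - y) = dif A x - dif A y"
proof -
  assume x: "x \<in> gcar A p" and y: "y \<in> gcar A p"
  have "dif A (x + - y) = dif A x + dif A (- y)" using x y by (intro d_add) auto
  thus ?thesis using d_neg[OF y] by (simp only: diff_conv_add_uminus)
qed
lemma d_sum: "(\<And>i. i \<in> I \<Longrightarrow> h i \<in> gcar A p) \<Longrightarrow> dif A (sum h I) = (\<Sum>i\<in>I. dif A (h i))"
proof (induction I rule: infinite_finite_induct)
  case (insert a F) thus ?case by (simp add: d_add[of _ p] sum_in)
qed auto

lemma mul_zero_l[simp]: "y \<in> gcar A q \<Longrightarrow> mul A 0 y = 0"
proof -
  assume y: "y \<in> gcar A q"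
  have "mul A (0 + 0) y = mul A 0 y + mul A 0 y" using y by (intro mul_add_l[of _ 0]) auto
  thus ?thesis by simp
qed
lemma mul_zero_r[simp]: "y \<in> gcar A q \<Longrightarrow> mul A y 0 = 0"
proof -
  assume y: "y \<in> gcar A q"
  have "mul A y (0 + 0) = mul A y 0 + mul A y 0" using y by (intro mul_add_r[of _ 0]) auto
  thus ?thesis by simp
qed
lemma mul_neg_l: "x \<in> gcar A p \<Longrightarrow> y \<in> gcar A q \<Longrightarrow> mul A (- x) y = - mul A x y"
proof -
  assume x: "x \<in> gcar A p" and y: "y \<in> gcar A q"
  have "mul A (x + - x) y = mul A x y + mul A (-x) y" using x y by (intro mul_add_l) auto
  thus ?thesis using y by (simp add: eq_neg_iff_add_eq_0 add.commute)
qed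
lemma mul_neg_r: "x \<in> gcar A p \<Longrightarrow> y \<in> gcar A q \<Longrightarrow> mul A y (- x) = - mul A y x"
proof -
  assume x: "x \<in> gcar A p" and y: "y \<in> gcar A q"
  have "mul A y (x + - x) = mul A y x + mul A y (-x)" using x y by (intro mul_add_r) auto
  thus ?thesis using y by (simp add: eq_neg_iff_add_eq_0 add.commute)
qed
lemma mul_sum_r: "y \<in> gcar A q \<Longrightarrow> (\<And>i. i \<in> I \<Longrightarrow> h i \<in> gcar A p) \<Longrightarrow> mul A y (sum h I) = (\<Sum>i\<in>I. mul A y (h i))"
proof (induction I rule: infinite_finite_induct)
  case (insert a F) thus ?case by (simp add: mul_add_r[of _ p] sum_in)
qed auto

lemma d_one[simp]: "dif A (one A) = 0"
proof -
  have h1: "dif A (one A) \<in> gcar A 1" using d_in[of "one A" 0] by simp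
  have "dif A (mul A (one A) (one A)) = mul A (dif A (one A)) (one A) + scl A (ksign 0) (mul A (one A) (dif A (one A)))"
    by (rule leib) auto
  also have "\<dots> = dif A (one A) + dif A (one A)"
    using one_r[OF h1] one_l[OF h1] by (simp add: scl_one)
  finally have "dif A (one A) = dif A (one A) + dif A (one A)" using one_l[of "one A" 0] by simp
  thus ?thesis by (metis add_cancel_right_right)
qed

lemma leib0: "x \<in> gcar A 0 \<Longrightarrow> y \<in> gcar A q \<Longrightarrow>
   dif A (mul A x y) = mul A (dif A x) y + mul A x (dif A y)"
  using leib[of x 0 y q] by (simp add: scl_one)
lemma leib1: "x \<in> gcar A 1 \<Longrightarrow> y \<in> gcar A q \<Longrightarrow>
   dif A (mul A x y) = mul A (dif A x) y - mul A x (dif A y)"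
  using leib[of x 1 y q] by (simp add: scl_neg1)

lemma exact_d: "u \<in> gcar A (p - 1) \<Longrightarrow> exact_in A p (dif A u)"
  unfolding exact_in_def by blast
lemma exact_zero: "exact_in A p 0"
  unfolding exact_in_def by (rule bexI[of _ 0]) auto
lemma exact_add: "exact_in A p x \<Longrightarrow> exact_in A p y \<Longrightarrow> exact_in A p (x + y)"
proof -
  assume "exact_in A p x" "exact_in A p y"
  then obtain u v where u: "u \<in> gcar A (p - 1)" "x = dif A u" and v: "v \<in> gcar A (p - 1)" "y = dif A v"
    unfolding exact_in_def by blast
  have "x + y = dif A (u + v)" using u v d_add[OF u(1) v(1)] by simp
  thus ?thesis unfolding exact_in_def using add_in[OF u(1) v(1)] by blast
qed
lemma exact_neg: "exact_in A p x \<Longrightarrow> exact_in A p (- x)"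
proof -
  assume "exact_in A p x"
  then obtain u where u: "u \<in> gcar A (p - 1)" "x = dif A u"
    unfolding exact_in_def by blast
  have "- x = dif A (- u)" using u d_neg[OF u(1)] by simp
  thus ?thesis unfolding exact_in_def using neg_in[OF u(1)] by blast
qed
lemma exact_diff: "exact_in A p x \<Longrightarrow> exact_in A p y \<Longrightarrow> exact_in A p (x - y)"
  using exact_add[of p x "- y"] exact_neg[of p y] by (simp only: diff_conv_add_uminus)
lemma exact_in_car: "exact_in A p x \<Longrightarrow> x \<in> gcar A p"
proof -
  assume "exact_in A p x"
  then obtain u where u: "u \<in> gcar A (p - 1)" "x = dif A u"
    unfolding exact_in_def by blast
  show ?thesis using d_in[OF u(1)] u(2) by simp
qed
lemma exact_cong: "exact_in A p x \<Longrightarrow> x = y \<Longrightarrow> exact_in A p y" by simp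

end

locale cdgl = dgl A for A :: "('k::field_char_0, 'a::ab_group_add) dga_rec" +
  assumes comm: "x \<in> gcar A p \<Longrightarrow> y \<in> gcar A q \<Longrightarrow> mul A x y = scl A (ksign (p * q)) (mul A y x)"
begin

lemma comm0: "x \<in> gcar A 0 \<Longrightarrow> y \<in> gcar A q \<Longrightarrow> mul A x y = mul A y x"
  using comm[of x 0 y q] by (simp add: scl_one)

lemma sq1: "x \<in> gcar A 1 \<Longrightarrow> mul A x x = 0"
proof -
  assume x: "x \<in> gcar A 1"
  let ?v = "mul A x x"
  have "?v = - ?v" using comm[OF x x] by (simp add: scl_neg1)
  hence "?v + ?v = 0" by (metis add.right_inverse)
  hence "scl A (1/2) (?v + ?v) = 0" by (simp add: scl_zero_r)
  hence "scl A (1/2) ?v + scl A (1/2) ?v = 0" by (simp add: module.scale_right_distrib[OF md])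
  hence "scl A (1/2 + 1/2) ?v = 0" by (simp only: module.scale_left_distrib[OF md])
  thus ?thesis by (simp add: scl_one)
qed

end

lemma cdglI: "is_cdga A \<Longrightarrow> cdgl A"
proof -
  assume h: "is_cdga A"
  have "is_dga A" using h unfolding is_cdga_def by (elim conjE)
  hence "dgl A" unfolding dgl_def .
  moreover have "cdgl_axioms A" unfolding cdgl_axioms_def using h unfolding is_cdga_def by (elim conjE) blast
  ultimately show ?thesis unfolding cdgl_def by (intro conjI)
qed




lemma qc_parts:
  assumes "quasi_iso_to_coh M B g"
  shows qc_in: "\<And>x p. x \<in> gcar M p \<Longrightarrow> g x \<in> gcar B p \<and> dif B (g x) = 0"
    and qc_add: "\<And>x y p. x \<in> gcar M p \<Longrightarrow> y \<in> gcar M p \<Longrightarrow> exact_in B p (g (x + y) - (g x + g y))"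
    and qc_scl: "\<And>x c p. x \<in> gcar M p \<Longrightarrow> exact_in B p (g (scl M c x) - scl B c (g x))"
    and qc_mul: "\<And>x y p q. x \<in> gcar M p \<Longrightarrow> y \<in> gcar M q \<Longrightarrow> exact_in B (p + q) (g (mul M x y) - mul B (g x) (g y))"
    and qc_inj: "\<And>z p. z \<in> gcar M p \<Longrightarrow> dif M z = 0 \<Longrightarrow> exact_in B p (g z) \<Longrightarrow> exact_in M p z"
    and qc_surj: "\<And>w p. w \<in> gcar B p \<Longrightarrow> dif B w = 0 \<Longrightarrow> \<exists>z \<in> gcar M p. dif M z = 0 \<and> exact_in B p (g z - w)"
proof -
  note h = assms[unfolded quasi_iso_to_coh_def]
  have h1: "\<forall>p. \<forall>x \<in> gcar M p. g x \<in> gcar B p \<and> dif B (g x) = 0" using h by (elim conjE) assumption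
  have h2: "\<forall>p c. \<forall>x \<in> gcar M p. \<forall>y \<in> gcar M p.
        exact_in B p (g (x + y) - (g x + g y)) \<and> exact_in B p (g (scl M c x) - scl B c (g x))" using h by (elim conjE) assumption
  have h3: "\<forall>p q. \<forall>x \<in> gcar M p. \<forall>y \<in> gcar M q. exact_in B (p + q) (g (mul M x y) - mul B (g x) (g y))" using h by (elim conjE) assumption
  have h6: "\<forall>p. \<forall>z \<in> gcar M p. dif M z = 0 \<longrightarrow> exact_in B p (g z) \<longrightarrow> exact_in M p z" using h by (elim conjE) assumption
  have h7: "\<forall>p. \<forall>w \<in> gcar B p. dif B w = 0 \<longrightarrow>
        (\<exists>z \<in> gcar M p. dif M z = 0 \<and> exact_in B p (g z - w))" using h by (elim conjE) assumption
  show "\<And>x p. x \<in> gcar M p \<Longrightarrow> g x \<in> gcar B p \<and> dif B (g x) = 0" using h1 by blast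
  show "\<And>x y p. x \<in> gcar M p \<Longrightarrow> y \<in> gcar M p \<Longrightarrow> exact_in B p (g (x + y) - (g x + g y))" using h2 by blast
  show "\<And>x c p. x \<in> gcar M p \<Longrightarrow> exact_in B p (g (scl M c x) - scl B c (g x))" using h2 by blast
  show "\<And>x y p q. x \<in> gcar M p \<Longrightarrow> y \<in> gcar M q \<Longrightarrow> exact_in B (p + q) (g (mul M x y) - mul B (g x) (g y))" using h3 by blast
  show "\<And>z p. z \<in> gcar M p \<Longrightarrow> dif M z = 0 \<Longrightarrow> exact_in B p (g z) \<Longrightarrow> exact_in M p z" using h6 by blast
  show "\<And>w p. w \<in> gcar B p \<Longrightarrow> dif B w = 0 \<Longrightarrow> \<exists>z \<in> gcar M p. dif M z = 0 \<and> exact_in B p (g z - w)" using h7 by blast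
qed

lemma M_step:
  fixes M :: "('k::field_char_0, 'm::ab_group_add) dga_rec" and B :: "('k, 'b::ab_group_add) dga_rec"
  assumes cM: "cdgl M" and dB: "dgl B" and qg: "quasi_iso_to_coh M B g"
    and e: "e \<in> gcar M 1" "dif M e = 0" and a: "a \<in> gcar M p"
    and ex: "exact_in M (p + 1) (mul M e a)"
  shows "\<exists>a' \<in> gcar M p. dif M a' + mul M e a = 0 \<and> exact_in M (p + 1) (mul M e a')"
proof -
  interpret M: cdgl M by (rule cM)
  interpret B: dgl B by (rule dB)
  obtain u where u: "u \<in> gcar M p" "mul M e a = dif M u"
    using ex unfolding exact_in_def by auto
  define a'' where "a'' = - u"
  have a''M: "a'' \<in> gcar M p" using u by (auto simp: a''_def)
  have ga'': "g a'' \<in> gcar B p" "dif B (g a'') = 0" using qc_in[OF qg a''M] by auto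
  obtain c where c: "c \<in> gcar M p" "dif M c = 0" "exact_in B p (g c - g a'')"
    using qc_surj[OF qg ga''] by blast
  define a' where "a' = a'' + - c"
  have a'M: "a' \<in> gcar M p" using a''M c by (auto simp: a'_def)
  have da': "dif M a' + mul M e a = 0"
    using M.d_add[OF a''M M.neg_in[OF c(1)]] M.d_neg[OF c(1)] M.d_neg[OF u(1)] c(2) u(2)
    by (simp add: a'_def a''_def)
  have E1: "exact_in B p (g (a'' + - c) - (g a'' + g (- c)))" using qc_add[OF qg a''M M.neg_in[OF c(1)]] .
  have E2: "exact_in B p (g (- c) - scl B (-1) (g c))" using qc_scl[OF qg c(1), of "-1"] by (simp add: M.scl_neg1)
  have "exact_in B p ((g (a'' + - c) - (g a'' + g (- c))) + (g (- c) - scl B (-1) (g c)) - (g c - g a''))"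
    by (intro B.exact_diff B.exact_add E1 E2 c(3))
  hence ga': "exact_in B p (g a')" by (simp add: a'_def B.scl_neg1 algebra_simps)
  have ea': "mul M e a' \<in> gcar M (1 + p)" using e a'M by auto
  have eaM: "mul M e a \<in> gcar M (1 + p)" using e a by auto
  have dea': "dif M (mul M e a') = 0"
  proof -
    have "dif M (mul M e a') = mul M (dif M e) a' - mul M e (dif M a')" by (rule M.leib1[OF e(1) a'M])
    also have "dif M a' = - mul M e a" using da' by (simp add: eq_neg_iff_add_eq_0)
    also have "mul M e (- mul M e a) = - mul M e (mul M e a)" by (rule M.mul_neg_r[OF eaM e(1)])
    also have "mul M e (mul M e a) = mul M (mul M e e) a" using M.assoc[OF e(1) e(1) a] by simp
    also have "mul M e e = 0" by (rule M.sq1[OF e(1)])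
    finally show ?thesis using e a a'M by simp
  qed
  obtain w where w: "w \<in> gcar B (p - 1)" "g a' = dif B w" using ga' unfolding exact_in_def by auto
  have ge: "g e \<in> gcar B 1" "dif B (g e) = 0" using qc_in[OF qg e(1)] by auto
  have gew: "mul B (g e) w \<in> gcar B (1 + p - 1)" using ge(1) w(1) by (intro B.mul_in') auto
  have "dif B (mul B (g e) w) = mul B (dif B (g e)) w - mul B (g e) (dif B w)" by (rule B.leib1[OF ge(1) w(1)])
  hence "mul B (g e) (g a') = dif B (- mul B (g e) w)" using ge(2) w B.d_neg[OF gew] by simp
  hence X: "exact_in B (1 + p) (mul B (g e) (g a'))" using B.exact_d[OF B.neg_in[OF gew]] by simp
  have "exact_in B (1 + p) (g (mul M e a') - mul B (g e) (g a') + mul B (g e) (g a'))"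
    by (intro B.exact_add X qc_mul[OF qg e(1) a'M])
  hence "exact_in B (1 + p) (g (mul M e a'))" by simp
  hence "exact_in M (1 + p) (mul M e a')" by (rule qc_inj[OF qg ea' dea'])
  hence "exact_in M (p + 1) (mul M e a')" by (simp add: add.commute)
  thus ?thesis using a'M da' by blast
qed

lemma M_seq:
  fixes M :: "('k::field_char_0, 'm::ab_group_add) dga_rec" and B :: "('k, 'b::ab_group_add) dga_rec"
  assumes cM: "cdgl M" and dB: "dgl B" and qg: "quasi_iso_to_coh M B g"
    and e: "e \<in> gcar M 1" "dif M e = 0" and z: "z \<in> gcar M p"
    and ex: "exact_in M (p + 1) (mul M e z)"
  shows "\<exists>\<sigma>. \<sigma> 0 = z \<and> (\<forall>n. \<sigma> n \<in> gcar M p) \<and> (\<forall>n. dif M (\<sigma> (Suc n)) + mul M e (\<sigma> n) = 0)"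
proof -
  define P where "P a a' \<longleftrightarrow> a' \<in> gcar M p \<and> dif M a' + mul M e a = 0 \<and> exact_in M (p + 1) (mul M e a')" for a a'
  define \<sigma> where "\<sigma> = rec_nat z (\<lambda>_ a. SOME a'. P a a')"
  have inv: "\<sigma> n \<in> gcar M p \<and> exact_in M (p + 1) (mul M e (\<sigma> n))" for n
  proof (induction n)
    case 0 thus ?case using z ex by (simp add: \<sigma>_def)
  next
    case (Suc n)
    have "\<exists>a'. P (\<sigma> n) a'" using M_step[OF cM dB qg e, of "\<sigma> n" p] Suc unfolding P_def by blast
    hence "P (\<sigma> n) (\<sigma> (Suc n))" unfolding \<sigma>_def by (simp add: someI_ex)
    thus ?case unfolding P_def by blast
  qed
  have rel: "dif M (\<sigma> (Suc n)) + mul M e (\<sigma> n) = 0" for n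
  proof -
    have "\<exists>a'. P (\<sigma> n) a'" using M_step[OF cM dB qg e, of "\<sigma> n" p] inv unfolding P_def by blast
    hence "P (\<sigma> n) (\<sigma> (Suc n))" unfolding \<sigma>_def by (simp add: someI_ex)
    thus ?thesis unfolding P_def by blast
  qed
  show ?thesis using inv rel by (intro exI[of _ \<sigma>]) (simp add: \<sigma>_def)
qed




context cdgl
begin

lemma scl_add1: "v + scl A c v = scl A (1 + c) v"
  by (simp only: module.scale_left_distrib[OF md] scl_one)

fun Eb :: "'a \<Rightarrow> nat \<Rightarrow> 'a" where
  "Eb b 0 = one A"
| "Eb b (Suc k) = scl A (inverse (of_nat (Suc k))) (mul A b (Eb b k))"

lemma Eb_in: assumes b: "b \<in> gcar A 0" shows "Eb b k \<in> gcar A 0"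
proof (induction k)
  case (Suc k)
  have "mul A b (Eb b k) \<in> gcar A 0" using mul_in[OF b Suc.IH] by simp
  thus ?case unfolding Eb.simps by (rule scl_in)
qed simp

lemma Eb_mul: assumes b: "b \<in> gcar A 0" shows "mul A b (Eb b k) = scl A (of_nat (Suc k)) (Eb b (Suc k))"
proof -
  have "scl A (of_nat (Suc k)) (Eb b (Suc k)) = scl A (of_nat (Suc k) * inverse (of_nat (Suc k))) (mul A b (Eb b k))"
    by (simp add: module.scale_scale[OF md])
  also have "of_nat (Suc k) * inverse (of_nat (Suc k)) = (1::'k)"
    by (simp del: of_nat_Suc)
  finally show ?thesis by (simp add: scl_one)
qed

lemma dEb: assumes b: "b \<in> gcar A 0" shows "dif A (Eb b (Suc k)) = mul A (dif A b) (Eb b k)"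
proof (induction k)
  case 0
  have "dif A (Eb b (Suc 0)) = dif A b" using one_r[OF b] by (simp add: scl_one)
  thus ?case using one_r[of "dif A b" 1] d_in[OF b] by simp
next
  case (Suc k)
  let ?\<beta> = "dif A b"
  have be: "?\<beta> \<in> gcar A 1" using d_in[OF b] by simp
  have E1: "Eb b (Suc k) \<in> gcar A 0" "Eb b k \<in> gcar A 0" by (rule Eb_in[OF b])+
  have bE: "mul A b (Eb b (Suc k)) \<in> gcar A 0" using mul_in[OF b E1(1)] by simp
  have "dif A (Eb b (Suc (Suc k))) = scl A (inverse (of_nat (Suc (Suc k)))) (dif A (mul A b (Eb b (Suc k))))"
    using d_scl[OF bE] by simp
  also have "dif A (mul A b (Eb b (Suc k))) = mul A ?\<beta> (Eb b (Suc k)) + mul A b (mul A ?\<beta> (Eb b k))"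
    using leib0[OF b E1(1)] Suc by simp
  also have "mul A b (mul A ?\<beta> (Eb b k)) = mul A ?\<beta> (mul A b (Eb b k))"
  proof -
    have "mul A b (mul A ?\<beta> (Eb b k)) = mul A (mul A b ?\<beta>) (Eb b k)" using assoc[OF b be E1(2)] by simp
    also have "mul A b ?\<beta> = mul A ?\<beta> b" by (rule comm0[OF b be])
    also have "mul A (mul A ?\<beta> b) (Eb b k) = mul A ?\<beta> (mul A b (Eb b k))" by (rule assoc[OF be b E1(2)])
    finally show ?thesis .
  qed
  also have "mul A b (Eb b k) = scl A (of_nat (Suc k)) (Eb b (Suc k))" by (rule Eb_mul[OF b])
  also have "mul A ?\<beta> (scl A (of_nat (Suc k)) (Eb b (Suc k))) = scl A (of_nat (Suc k)) (mul A ?\<beta> (Eb b (Suc k)))"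
    by (rule mul_scl_r[OF be E1(1)])
  also have "mul A ?\<beta> (Eb b (Suc k)) + scl A (of_nat (Suc k)) (mul A ?\<beta> (Eb b (Suc k)))
      = scl A (1 + of_nat (Suc k)) (mul A ?\<beta> (Eb b (Suc k)))"
    by (rule scl_add1)
  also have "scl A (inverse (of_nat (Suc (Suc k)))) (scl A (1 + of_nat (Suc k)) (mul A ?\<beta> (Eb b (Suc k))))
      = scl A (inverse (of_nat (Suc (Suc k))) * (1 + of_nat (Suc k))) (mul A ?\<beta> (Eb b (Suc k)))"
    by (simp add: module.scale_scale[OF md] del: of_nat_Suc)
  also have "inverse (of_nat (Suc (Suc k))) * (1 + of_nat (Suc k)) = (1::'k)"
  proof -
    have "(1::'k) + of_nat (Suc k) = of_nat (Suc (Suc k))" by simp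
    thus ?thesis by (simp del: of_nat_Suc)
  qed
  finally show ?case by (simp add: scl_one)
qed

lemma gauge:
  assumes eta: "\<eta> \<in> gcar A 1" and b: "b \<in> gcar A 0"
    and F: "\<And>n. F n \<in> gcar A p" and F0: "dif A (F 0) = 0"
    and FS: "\<And>n. dif A (F (Suc n)) + mul A (\<eta> + dif A b) (F n) = 0"
  shows "\<exists>e. e 0 = F 0 \<and> (\<forall>n. e n \<in> gcar A p) \<and> (\<forall>n. dif A (e (Suc n)) + mul A \<eta> (e n) = 0)"
proof -
  let ?\<beta> = "dif A b"
  have be: "?\<beta> \<in> gcar A 1" using d_in[OF b] by simp
  have E: "\<And>k. Eb b k \<in> gcar A 0" using Eb_in[OF b] .
  define e where "e n = (\<Sum>k\<le>n. mul A (Eb b k) (F (n - k)))" for n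
  have EF: "\<And>k m. mul A (Eb b k) (F m) \<in> gcar A p" using mul_in'[OF E F] by simp
  have ein: "e n \<in> gcar A p" for n unfolding e_def using EF by (intro sum_in) auto
  have e0: "e 0 = F 0" unfolding e_def using one_l[OF F] by simp
  have swap: "mul A X (mul A (Eb b k) (F m)) = mul A (Eb b k) (mul A X (F m))" if X: "X \<in> gcar A 1" for X k m
  proof -
    have "mul A X (mul A (Eb b k) (F m)) = mul A (mul A X (Eb b k)) (F m)" using assoc[OF X E F] by simp
    also have "mul A X (Eb b k) = mul A (Eb b k) X" using comm0[OF E X] by simp
    also have "mul A (mul A (Eb b k) X) (F m) = mul A (Eb b k) (mul A X (F m))" by (rule assoc[OF E X F])
    finally show ?thesis .
  qed
  have rel: "dif A (e (Suc n)) + mul A \<eta> (e n) = 0" for n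
  proof -
    have "dif A (e (Suc n)) = (\<Sum>k\<le>Suc n. dif A (mul A (Eb b k) (F (Suc n - k))))"
      unfolding e_def using EF by (intro d_sum) auto
    also have "\<dots> = (\<Sum>k\<le>Suc n. mul A (dif A (Eb b k)) (F (Suc n - k))) + (\<Sum>k\<le>Suc n. mul A (Eb b k) (dif A (F (Suc n - k))))"
      by (simp add: leib0[OF E F] sum.distrib)
    also have "(\<Sum>k\<le>Suc n. mul A (dif A (Eb b k)) (F (Suc n - k))) = (\<Sum>k\<le>n. mul A (Eb b k) (mul A ?\<beta> (F (n - k))))"
    proof -
      have "(\<Sum>k\<le>Suc n. mul A (dif A (Eb b k)) (F (Suc n - k))) = mul A (dif A (Eb b 0)) (F (Suc n)) + (\<Sum>k\<le>n. mul A (dif A (Eb b (Suc k))) (F (Suc n - Suc k)))"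
        by (subst sum.atMost_Suc_shift) simp
      also have "mul A (dif A (Eb b 0)) (F (Suc n)) = 0" using mul_zero_l[OF F[of "Suc n"]] by simp
      also have "(\<Sum>k\<le>n. mul A (dif A (Eb b (Suc k))) (F (Suc n - Suc k))) = (\<Sum>k\<le>n. mul A (Eb b k) (mul A ?\<beta> (F (n - k))))"
      proof (rule sum.cong[OF refl])
        fix k assume "k \<in> {..n}"
        have "mul A (dif A (Eb b (Suc k))) (F (Suc n - Suc k)) = mul A (mul A ?\<beta> (Eb b k)) (F (n - k))" using dEb[OF b] by simp
        also have "\<dots> = mul A ?\<beta> (mul A (Eb b k) (F (n - k)))" by (rule assoc[OF be E F])
        also have "\<dots> = mul A (Eb b k) (mul A ?\<beta> (F (n - k)))" by (rule swap[OF be])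
        finally show "mul A (dif A (Eb b (Suc k))) (F (Suc n - Suc k)) = mul A (Eb b k) (mul A ?\<beta> (F (n - k)))" .
      qed
      finally show ?thesis by simp
    qed
    also have "(\<Sum>k\<le>Suc n. mul A (Eb b k) (dif A (F (Suc n - k)))) = (\<Sum>k\<le>n. - (mul A (Eb b k) (mul A \<eta> (F (n - k))) + mul A (Eb b k) (mul A ?\<beta> (F (n - k)))))"
    proof -
      have "(\<Sum>k\<le>Suc n. mul A (Eb b k) (dif A (F (Suc n - k)))) = (\<Sum>k\<le>n. mul A (Eb b k) (dif A (F (Suc n - k)))) + mul A (Eb b (Suc n)) (dif A (F (Suc n - Suc n)))"
        by (simp only: sum.atMost_Suc)
      also have "mul A (Eb b (Suc n)) (dif A (F (Suc n - Suc n))) = 0" using F0 mul_zero_r[OF E[of "Suc n"]] by (simp del: Eb.simps)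
      also have "(\<Sum>k\<le>n. mul A (Eb b k) (dif A (F (Suc n - k)))) = (\<Sum>k\<le>n. - (mul A (Eb b k) (mul A \<eta> (F (n - k))) + mul A (Eb b k) (mul A ?\<beta> (F (n - k)))))"
      proof (rule sum.cong[OF refl])
        fix k assume "k \<in> {..n}"
        hence k: "Suc n - k = Suc (n - k)" by auto
        have etaF: "mul A \<eta> (F (n - k)) \<in> gcar A (1 + p)" "mul A ?\<beta> (F (n - k)) \<in> gcar A (1 + p)" using eta be F by auto
        have "dif A (F (Suc n - k)) = - mul A (\<eta> + ?\<beta>) (F (n - k))" using FS[of "n - k"] k by (simp add: eq_neg_iff_add_eq_0)
        also have "mul A (\<eta> + ?\<beta>) (F (n - k)) = mul A \<eta> (F (n - k)) + mul A ?\<beta> (F (n - k))" by (rule mul_add_l[OF eta be F])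
        finally have "mul A (Eb b k) (dif A (F (Suc n - k))) = mul A (Eb b k) (- (mul A \<eta> (F (n - k)) + mul A ?\<beta> (F (n - k))))" by simp
        also have "\<dots> = - mul A (Eb b k) (mul A \<eta> (F (n - k)) + mul A ?\<beta> (F (n - k)))"
          using etaF E by (intro mul_neg_r) auto
        also have "mul A (Eb b k) (mul A \<eta> (F (n - k)) + mul A ?\<beta> (F (n - k))) = mul A (Eb b k) (mul A \<eta> (F (n - k))) + mul A (Eb b k) (mul A ?\<beta> (F (n - k)))"
          by (rule mul_add_r[OF etaF E])
        finally show "mul A (Eb b k) (dif A (F (Suc n - k))) = - (mul A (Eb b k) (mul A \<eta> (F (n - k))) + mul A (Eb b k) (mul A ?\<beta> (F (n - k))))" .
      qed
      finally show ?thesis by simp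
    qed
    finally have D: "dif A (e (Suc n)) = (\<Sum>k\<le>n. mul A (Eb b k) (mul A ?\<beta> (F (n - k)))) + (\<Sum>k\<le>n. - (mul A (Eb b k) (mul A \<eta> (F (n - k))) + mul A (Eb b k) (mul A ?\<beta> (F (n - k)))))" .
    have H: "mul A \<eta> (e n) = (\<Sum>k\<le>n. mul A (Eb b k) (mul A \<eta> (F (n - k))))"
    proof -
      have "mul A \<eta> (e n) = (\<Sum>k\<le>n. mul A \<eta> (mul A (Eb b k) (F (n - k))))"
        unfolding e_def using EF eta by (intro mul_sum_r) auto
      also have "\<dots> = (\<Sum>k\<le>n. mul A (Eb b k) (mul A \<eta> (F (n - k))))" using swap[OF eta] by simp
      finally show ?thesis .
    qed
    show ?thesis unfolding D H by (simp add: sum.distrib[symmetric] sum_negf[symmetric] algebra_simps)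
  qed
  show ?thesis using e0 ein rel by blast
qed

end



lemma qi_parts:
  assumes "quasi_iso M B f"
  shows qi_in: "\<And>x p. x \<in> gcar M p \<Longrightarrow> f x \<in> gcar B p"
    and qi_add: "\<And>x y p. x \<in> gcar M p \<Longrightarrow> y \<in> gcar M p \<Longrightarrow> f (x + y) = f x + f y"
    and qi_mul: "\<And>x y p q. x \<in> gcar M p \<Longrightarrow> y \<in> gcar M q \<Longrightarrow> f (mul M x y) = mul B (f x) (f y)"
    and qi_d: "\<And>x p. x \<in> gcar M p \<Longrightarrow> f (dif M x) = dif B (f x)"
    and qi_inj: "\<And>z p. z \<in> gcar M p \<Longrightarrow> dif M z = 0 \<Longrightarrow> exact_in B p (f z) \<Longrightarrow> exact_in M p z"
    and qi_surj: "\<And>w p. w \<in> gcar B p \<Longrightarrow> dif B w = 0 \<Longrightarrow> \<exists>z \<in> gcar M p. dif M z = 0 \<and> exact_in B p (f z - w)"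
proof -
  note h = assms[unfolded quasi_iso_def]
  have h1: "\<forall>p. \<forall>x \<in> gcar M p. f x \<in> gcar B p" using h by (elim conjE) assumption
  have h2: "\<forall>p c. \<forall>x \<in> gcar M p. \<forall>y \<in> gcar M p. f (x + y) = f x + f y \<and> f (scl M c x) = scl B c (f x)" using h by (elim conjE) assumption
  have h3: "\<forall>p q. \<forall>x \<in> gcar M p. \<forall>y \<in> gcar M q. f (mul M x y) = mul B (f x) (f y)" using h by (elim conjE) assumption
  have h5: "\<forall>p. \<forall>x \<in> gcar M p. f (dif M x) = dif B (f x)" using h by (elim conjE) assumption
  have h6: "\<forall>p. \<forall>z \<in> gcar M p. dif M z = 0 \<longrightarrow> exact_in B p (f z) \<longrightarrow> exact_in M p z" using h by (elim conjE) assumption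
  have h7: "\<forall>p. \<forall>w \<in> gcar B p. dif B w = 0 \<longrightarrow>
        (\<exists>z \<in> gcar M p. dif M z = 0 \<and> exact_in B p (f z - w))" using h by (elim conjE) assumption
  show "\<And>x p. x \<in> gcar M p \<Longrightarrow> f x \<in> gcar B p" using h1 by blast
  show "\<And>x y p. x \<in> gcar M p \<Longrightarrow> y \<in> gcar M p \<Longrightarrow> f (x + y) = f x + f y" using h2 by blast
  show "\<And>x y p q. x \<in> gcar M p \<Longrightarrow> y \<in> gcar M q \<Longrightarrow> f (mul M x y) = mul B (f x) (f y)" using h3 by blast
  show "\<And>x p. x \<in> gcar M p \<Longrightarrow> f (dif M x) = dif B (f x)" using h5 by blast
  show "\<And>z p. z \<in> gcar M p \<Longrightarrow> dif M z = 0 \<Longrightarrow> exact_in B p (f z) \<Longrightarrow> exact_in M p z" using h6 by blast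
  show "\<And>w p. w \<in> gcar B p \<Longrightarrow> dif B w = 0 \<Longrightarrow> \<exists>z \<in> gcar M p. dif M z = 0 \<and> exact_in B p (f z - w)" using h7 by blast
qed

locale ctx =
  fixes A :: "('k::field_char_0, 'a::ab_group_add) dga_rec"
    and B :: "('k, 'b::ab_group_add) dga_rec"
    and act :: "'a \<Rightarrow> 'b \<Rightarrow> 'b"
    and N K :: "int \<Rightarrow> 'b set"
    and xi :: 'a
  assumes cA: "is_cdga A"
    and over: "dga_over A B act"
    and cB: "is_cdga B"
    and subN: "dg_submodule A B act N"
    and subK: "dg_submodule A B act K"
    and dec: "\<forall>p. gcar B p = {x + y | x y. x \<in> N p \<and> y \<in> K p}"
    and int: "\<forall>p. N p \<inter> K p = {0}"
    and xi: "xi \<in> gcar A 1"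
    and dxi: "dif A xi = 0"
begin

sublocale A: cdgl A by (rule cdglI[OF cA])
sublocale B: cdgl B by (rule cdglI[OF cB])

lemma modover: "dg_module_over A (scl B) (dif B) (gcar B) act"
  using over unfolding dga_over_def by (elim conjE)

lemma act_in: "a \<in> gcar A p \<Longrightarrow> x \<in> gcar B q \<Longrightarrow> act a x \<in> gcar B (p + q)"
proof -
  have "\<forall>p q. \<forall>a \<in> gcar A p. \<forall>x \<in> gcar B q. act a x \<in> gcar B (p + q)"
    using modover unfolding dg_module_over_def by (elim conjE) assumption
  thus "a \<in> gcar A p \<Longrightarrow> x \<in> gcar B q \<Longrightarrow> ?thesis" by blast
qed

lemma act_lin: "a \<in> gcar A p \<Longrightarrow> a' \<in> gcar A p \<Longrightarrow> x \<in> gcar B q \<Longrightarrow> x' \<in> gcar B q \<Longrightarrow>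
        act (a + a') x = act a x + act a' x \<and> act a (x + x') = act a x + act a x'"
proof -
  have "\<forall>p q c. \<forall>a \<in> gcar A p. \<forall>a' \<in> gcar A p. \<forall>x \<in> gcar B q. \<forall>x' \<in> gcar B q.
        act (a + a') x = act a x + act a' x \<and> act a (x + x') = act a x + act a x' \<and>
        act (scl A c a) x = scl B c (act a x) \<and> act a (scl B c x) = scl B c (act a x)"
    using modover unfolding dg_module_over_def by (elim conjE) assumption
  thus "a \<in> gcar A p \<Longrightarrow> a' \<in> gcar A p \<Longrightarrow> x \<in> gcar B q \<Longrightarrow> x' \<in> gcar B q \<Longrightarrow> ?thesis" by blast
qed

lemma act_mul: "a \<in> gcar A p \<Longrightarrow> a' \<in> gcar A p' \<Longrightarrow> x \<in> gcar B q \<Longrightarrow> act (mul A a a') x = act a (act a' x)"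
proof -
  have "\<forall>p p' q. \<forall>a \<in> gcar A p. \<forall>a' \<in> gcar A p'. \<forall>x \<in> gcar B q.
        act (mul A a a') x = act a (act a' x)"
    using modover unfolding dg_module_over_def by (elim conjE) assumption
  thus "a \<in> gcar A p \<Longrightarrow> a' \<in> gcar A p' \<Longrightarrow> x \<in> gcar B q \<Longrightarrow> ?thesis" by blast
qed

lemma act_d: "a \<in> gcar A p \<Longrightarrow> x \<in> gcar B q \<Longrightarrow> dif B (act a x) = act (dif A a) x + scl B (ksign p) (act a (dif B x))"
proof -
  have "\<forall>p q. \<forall>a \<in> gcar A p. \<forall>x \<in> gcar B q.
        dif B (act a x) = act (dif A a) x + scl B (ksign p) (act a (dif B x))"
    using modover unfolding dg_module_over_def by (elim conjE) assumption
  thus "a \<in> gcar A p \<Longrightarrow> x \<in> gcar B q \<Longrightarrow> ?thesis" by blast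
qed

lemma act_compat: "a \<in> gcar A p \<Longrightarrow> x \<in> gcar B q \<Longrightarrow> y \<in> gcar B r \<Longrightarrow> act a (mul B x y) = mul B (act a x) y"
proof -
  have "\<forall>p q r. \<forall>a \<in> gcar A p. \<forall>x \<in> gcar B q. \<forall>y \<in> gcar B r.
        act a (mul B x y) = mul B (act a x) y"
    using over unfolding dga_over_def by (elim conjE) assumption
  thus "a \<in> gcar A p \<Longrightarrow> x \<in> gcar B q \<Longrightarrow> y \<in> gcar B r \<Longrightarrow> ?thesis" by blast
qed

lemma act_zero_l: "x \<in> gcar B q \<Longrightarrow> act 0 x = 0"
proof -
  assume x: "x \<in> gcar B q"
  have "act (0 + 0) x = act 0 x + act 0 x" using act_lin[of 0 0 0 x q x] x by auto
  thus ?thesis by simp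
qed

lemma act_zero_r: "a \<in> gcar A p \<Longrightarrow> act a 0 = 0"
proof -
  assume a: "a \<in> gcar A p"
  have "act a (0 + 0) = act a 0 + act a 0" using act_lin[of a p a 0 0 0] a by auto
  thus ?thesis by simp
qed

lemma act_add_r: "a \<in> gcar A p \<Longrightarrow> x \<in> gcar B q \<Longrightarrow> x' \<in> gcar B q \<Longrightarrow> act a (x + x') = act a x + act a x'"
  using act_lin[of a p a x q x'] by blast

lemma act_neg_r: "a \<in> gcar A p \<Longrightarrow> x \<in> gcar B q \<Longrightarrow> act a (- x) = - act a x"
proof -
  assume a: "a \<in> gcar A p" and x: "x \<in> gcar B q"
  have "act a (x + - x) = act a x + act a (- x)" using act_add_r[OF a x B.neg_in[OF x]] .
  thus ?thesis using act_zero_r[OF a] by (simp add: eq_neg_iff_add_eq_0 add.commute)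
qed

definition eta where "eta = act xi (one B)"

lemma eta_in: "eta \<in> gcar B 1"
  using act_in[OF xi B.one_in] by (simp add: eta_def)

lemma act_eta: "x \<in> gcar B q \<Longrightarrow> act xi x = mul B eta x"
  using act_compat[OF xi B.one_in, of x q] B.one_l[of x q] by (simp add: eta_def)

lemma d_eta: "dif B eta = 0"
  unfolding eta_def using act_d[OF xi B.one_in] act_zero_l[OF B.one_in] act_zero_r[OF xi] dxi
  by (simp add: B.scl_zero_r)

lemma act_sq: "x \<in> gcar B q \<Longrightarrow> act xi (act xi x) = 0"
  using act_mul[OF xi xi, of x q] A.sq1[OF xi] act_zero_l by simp

lemma d_act: "x \<in> gcar B q \<Longrightarrow> dif B (act xi x) = - act xi (dif B x)"
  using act_d[OF xi, of x q] act_zero_l[of x q] dxi by (simp add: B.scl_neg1)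

lemma sm_parts: assumes "dg_submodule A B act X"
  shows "X p \<subseteq> gcar B p" "module.subspace (scl B) (X p)"
    "x \<in> X p \<Longrightarrow> dif B x \<in> X (p + 1)" "a \<in> gcar A p \<Longrightarrow> x \<in> X q \<Longrightarrow> act a x \<in> X (p + q)"
proof -
  have h1: "\<forall>p. X p \<subseteq> gcar B p \<and> module.subspace (scl B) (X p)" using assms unfolding dg_submodule_def by (elim conjE) assumption
  have h2: "\<forall>p. \<forall>x \<in> X p. dif B x \<in> X (p + 1)" using assms unfolding dg_submodule_def by (elim conjE) assumption
  have h3: "\<forall>p q. \<forall>a \<in> gcar A p. \<forall>x \<in> X q. act a x \<in> X (p + q)" using assms unfolding dg_submodule_def by (elim conjE) assumption
  show "X p \<subseteq> gcar B p" "module.subspace (scl B) (X p)" using h1 by auto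
  show "x \<in> X p \<Longrightarrow> dif B x \<in> X (p + 1)" using h2 by blast
  show "a \<in> gcar A p \<Longrightarrow> x \<in> X q \<Longrightarrow> act a x \<in> X (p + q)" using h3 by blast
qed
lemmas N_parts = sm_parts[OF subN]
lemmas K_parts = sm_parts[OF subK]

lemma N_B: "x \<in> N p \<Longrightarrow> x \<in> gcar B p" using N_parts(1) by blast
lemma K_B: "x \<in> K p \<Longrightarrow> x \<in> gcar B p" using K_parts(1) by blast
lemma N0: "0 \<in> N p" using module.subspace_0[OF B.md N_parts(2)] .
lemma K0: "0 \<in> K p" using module.subspace_0[OF B.md K_parts(2)] .
lemma N_add: "x \<in> N p \<Longrightarrow> y \<in> N p \<Longrightarrow> x + y \<in> N p" using module.subspace_add[OF B.md N_parts(2)] .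
lemma K_add: "x \<in> K p \<Longrightarrow> y \<in> K p \<Longrightarrow> x + y \<in> K p" using module.subspace_add[OF B.md K_parts(2)] .
lemma N_neg: "x \<in> N p \<Longrightarrow> - x \<in> N p" using module.subspace_neg[OF B.md N_parts(2)] .
lemma K_diff: "x \<in> K p \<Longrightarrow> y \<in> K p \<Longrightarrow> x - y \<in> K p" using module.subspace_diff[OF B.md K_parts(2)] .
lemma N_diff: "x \<in> N p \<Longrightarrow> y \<in> N p \<Longrightarrow> x - y \<in> N p" using module.subspace_diff[OF B.md N_parts(2)] .

definition prj where "prj p w = (THE n. n \<in> N p \<and> w - n \<in> K p)"

lemma prj_eq: assumes n: "n \<in> N p" "w - n \<in> K p" shows "prj p w = n"
  unfolding prj_def
proof (rule the_equality)
  show "n \<in> N p \<and> w - n \<in> K p" using n by (rule conjI)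
  fix n' assume n': "n' \<in> N p \<and> w - n' \<in> K p"
  have a: "n' - n \<in> N p" using N_diff[of n' p n] n' n by simp
  have e: "n' - n = (w - n) - (w - n')" by (simp add: algebra_simps)
  have "(w - n) - (w - n') \<in> K p" using K_diff[of "w - n" p "w - n'"] n' n by simp
  hence b: "n' - n \<in> K p" by (simp only: e)
  have I: "N p \<inter> K p = {0}" using int by (rule spec)
  have "n' - n \<in> N p \<inter> K p" using a b by (rule IntI)
  hence "n' - n = 0" using I by simp
  thus "n' = n" by simp
qed

lemma prj_ex: assumes w: "w \<in> gcar B p" shows "prj p w \<in> N p" "w - prj p w \<in> K p"
proof -
  have "w \<in> {x + y | x y. x \<in> N p \<and> y \<in> K p}" using w dec by simp
  then obtain n k where nk: "w = n + k" "n \<in> N p" "k \<in> K p" by blast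
  have "prj p w = n" using nk by (intro prj_eq) auto
  thus "prj p w \<in> N p" "w - prj p w \<in> K p" using nk by auto
qed

lemma prj_N: "n \<in> N p \<Longrightarrow> prj p n = n" using K0 by (intro prj_eq) auto

lemma prj_add: assumes w: "w \<in> gcar B p" and w': "w' \<in> gcar B p" shows "prj p (w + w') = prj p w + prj p w'"
proof (rule prj_eq)
  show "prj p w + prj p w' \<in> N p" by (rule N_add[OF prj_ex(1)[OF w] prj_ex(1)[OF w']])
  have e: "w + w' - (prj p w + prj p w') = (w - prj p w) + (w' - prj p w')" by (simp add: algebra_simps)
  have "(w - prj p w) + (w' - prj p w') \<in> K p" by (rule K_add[OF prj_ex(2)[OF w] prj_ex(2)[OF w']])
  thus "w + w' - (prj p w + prj p w') \<in> K p" by (simp only: e)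
qed

lemma prj_d: assumes w: "w \<in> gcar B p" shows "prj (p + 1) (dif B w) = dif B (prj p w)"
proof (rule prj_eq)
  define n where "n = prj p w"
  define k where "k = w - n"
  have n: "n \<in> N p" and k: "k \<in> K p" using prj_ex[OF w] by (auto simp: n_def k_def)
  have wnk: "w = n + k" by (simp add: k_def)
  show "dif B (prj p w) \<in> N (p + 1)" using N_parts(3)[OF n] by (simp add: n_def)
  have "dif B w = dif B n + dif B k" unfolding wnk using N_B[OF n] K_B[OF k] by (rule B.d_add)
  hence e: "dif B w - dif B (prj p w) = dif B k" by (simp add: n_def)
  show "dif B w - dif B (prj p w) \<in> K (p + 1)" unfolding e by (rule K_parts(3)[OF k])
qed

lemma prj_act: assumes w: "w \<in> gcar B p" shows "prj (1 + p) (act xi w) = act xi (prj p w)"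
proof (rule prj_eq)
  define n where "n = prj p w"
  define k where "k = w - n"
  have n: "n \<in> N p" and k: "k \<in> K p" using prj_ex[OF w] by (auto simp: n_def k_def)
  have wnk: "w = n + k" by (simp add: k_def)
  show "act xi (prj p w) \<in> N (1 + p)" using N_parts(4)[OF xi n] by (simp add: n_def)
  have "act xi w = act xi n + act xi k" unfolding wnk using N_B[OF n] K_B[OF k] by (rule act_add_r[OF xi])
  hence e: "act xi w - act xi (prj p w) = act xi k" by (simp add: n_def)
  show "act xi w - act xi (prj p w) \<in> K (1 + p)" unfolding e by (rule K_parts(4)[OF xi k])
qed

end



context ctx
begin

lemma key:
  assumes formal: "formal_dga TYPE('m::ab_group_add) B"
    and x: "x \<in> N p" "dif B x = 0" and u0: "u0 \<in> N p" "act xi x = dif B u0"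
  shows "\<exists>s v. (\<forall>n. s n \<in> N p) \<and> (\<forall>n. dif B (s (Suc n)) + act xi (s n) = 0) \<and> v \<in> N (p - 1) \<and> s 0 = x + dif B v"
proof -
  obtain M :: "('k, 'm) dga_rec" and f g where
    ms: "minimal_sullivan M" and qf: "quasi_iso M B f" and qg: "quasi_iso_to_coh M B g"
    using formal unfolding formal_dga_def by blast
  have cM: "cdgl M" using ms unfolding minimal_sullivan_def by (intro cdglI) (elim conjE)
  interpret M: cdgl M by (rule cM)
  have dB: "dgl B" by (rule B.dgl_axioms)
  have xB: "x \<in> gcar B p" using N_B[OF x(1)] .
  have u0B: "u0 \<in> gcar B p" using N_B[OF u0(1)] .
  obtain e where e: "e \<in> gcar M 1" "dif M e = 0" "exact_in B 1 (f e - eta)"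
    using qi_surj[OF qf eta_in d_eta] by blast
  obtain b where b0: "b \<in> gcar B (1 - 1)" "f e - eta = dif B b" using e(3) unfolding exact_in_def by blast
  have b: "b \<in> gcar B 0" using b0(1) by simp
  have fe: "f e = eta + dif B b" using b0(2) by (metis add.commute diff_add_cancel)
  have db: "dif B b \<in> gcar B 1" using B.d_in[OF b] by simp
  obtain z where z: "z \<in> gcar M p" "dif M z = 0" "exact_in B p (f z - x)"
    using qi_surj[OF qf xB x(2)] by blast
  obtain v0 where v0: "v0 \<in> gcar B (p - 1)" "f z - x = dif B v0" using z(3) unfolding exact_in_def by blast
  have fz: "f z = x + dif B v0" using v0(2) by (metis add.commute diff_add_cancel)
  have dv0: "dif B v0 \<in> gcar B p" using B.d_in[OF v0(1)] by simp
  have ezM: "mul M e z \<in> gcar M (1 + p)" using e(1) z(1) by (rule M.mul_in)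
  have dez: "dif M (mul M e z) = 0" using M.leib1[OF e(1) z(1)] e(2) z(2) z(1) M.mul_zero_r[OF e(1)] by simp
  have X: "x + dif B v0 \<in> gcar B p" using xB dv0 by (rule B.add_in)
  have t1: "mul B eta x = dif B u0" using act_eta[OF xB] u0(2) by simp
  have ev0: "mul B eta v0 \<in> gcar B p" using B.mul_in[OF eta_in v0(1)] by simp
  have t2: "mul B eta (dif B v0) = dif B (- mul B eta v0)"
    using B.leib1[OF eta_in v0(1)] d_eta B.d_neg[OF ev0] v0(1) by simp
  have bx: "mul B b x \<in> gcar B p" using B.mul_in[OF b xB] by simp
  have t3: "mul B (dif B b) x = dif B (mul B b x)" using B.leib0[OF b xB] x(2) xB B.mul_zero_r[OF b] by simp
  have bv: "mul B b (dif B v0) \<in> gcar B p" using B.mul_in[OF b dv0] by simp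
  have t4: "mul B (dif B b) (dif B v0) = dif B (mul B b (dif B v0))"
    using B.leib0[OF b dv0] B.dd[OF v0(1)] B.mul_zero_r[OF b] by simp
  have "f (mul M e z) = mul B (eta + dif B b) (x + dif B v0)" using qi_mul[OF qf e(1) z(1)] fe fz by simp
  also have "\<dots> = mul B eta (x + dif B v0) + mul B (dif B b) (x + dif B v0)" by (rule B.mul_add_l[OF eta_in db X])
  also have "mul B eta (x + dif B v0) = mul B eta x + mul B eta (dif B v0)" by (rule B.mul_add_r[OF xB dv0 eta_in])
  also have "mul B (dif B b) (x + dif B v0) = mul B (dif B b) x + mul B (dif B b) (dif B v0)" by (rule B.mul_add_r[OF xB dv0 db])
  finally have "f (mul M e z) = dif B u0 + dif B (- mul B eta v0) + (dif B (mul B b x) + dif B (mul B b (dif B v0)))"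
    unfolding t1 t2 t3 t4 .
  also have "\<dots> = dif B (u0 + - mul B eta v0 + (mul B b x + mul B b (dif B v0)))"
    using u0B ev0 bx bv
    by (simp only: B.d_add[OF B.add_in[OF u0B B.neg_in[OF ev0]] B.add_in[OF bx bv]] B.d_add[OF u0B B.neg_in[OF ev0]] B.d_add[OF bx bv])
  finally have "exact_in B (1 + p) (f (mul M e z))"
    using u0B ev0 bx bv by (intro B.exact_cong[OF B.exact_d]) (auto intro!: B.add_in B.neg_in)
  hence "exact_in M (1 + p) (mul M e z)" by (rule qi_inj[OF qf ezM dez])
  hence ez: "exact_in M (p + 1) (mul M e z)" by (simp add: add.commute)
  obtain \<sigma> where \<sigma>: "\<sigma> 0 = z" "\<And>n. \<sigma> n \<in> gcar M p" "\<And>n. dif M (\<sigma> (Suc n)) + mul M e (\<sigma> n) = 0"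
    using M_seq[OF cM dB qg e(1,2) z(1) ez] by blast
  have f0: "f 0 = 0" for q :: int
  proof -
    have "f (0 + 0) = f 0 + f 0" by (rule qi_add[OF qf, of 0 q 0]) auto
    thus ?thesis by simp
  qed
  define F where "F n = f (\<sigma> n)" for n
  have F: "\<And>n. F n \<in> gcar B p" unfolding F_def using qi_in[OF qf \<sigma>(2)] .
  have F0: "dif B (F 0) = 0" unfolding F_def using qi_d[OF qf z(1)] z(2) \<sigma>(1) f0 by simp
  have FS: "dif B (F (Suc n)) + mul B (eta + dif B b) (F n) = 0" for n
  proof -
    have a1: "dif M (\<sigma> (Suc n)) \<in> gcar M (p + 1)" using M.d_in[OF \<sigma>(2)] .
    have a2: "mul M e (\<sigma> n) \<in> gcar M (p + 1)" using M.mul_in[OF e(1) \<sigma>(2)] by (simp add: add.commute)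
    have "dif B (F (Suc n)) + mul B (eta + dif B b) (F n) = f (dif M (\<sigma> (Suc n))) + f (mul M e (\<sigma> n))"
      unfolding F_def using qi_d[OF qf \<sigma>(2)] qi_mul[OF qf e(1) \<sigma>(2)] fe by simp
    also have "\<dots> = f (dif M (\<sigma> (Suc n)) + mul M e (\<sigma> n))" by (rule qi_add[OF qf a1 a2, symmetric])
    finally show ?thesis using \<sigma>(3) f0 by simp
  qed
  obtain e' where e': "e' 0 = F 0" "\<forall>n. e' n \<in> gcar B p" "\<forall>n. dif B (e' (Suc n)) + mul B eta (e' n) = 0"
    using B.gauge[OF eta_in b F F0 FS] by blast
  define s where "s n = prj p (e' n)" for n
  define v where "v = prj (p - 1) v0"
  have sN: "\<forall>n. s n \<in> N p" unfolding s_def using prj_ex(1) e'(2) by blast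
  have vN: "v \<in> N (p - 1)" unfolding v_def using prj_ex(1)[OF v0(1)] .
  have rel: "dif B (s (Suc n)) + act xi (s n) = 0" for n
  proof -
    have w1: "e' (Suc n) \<in> gcar B p" "e' n \<in> gcar B p" using e'(2) by auto
    have d1: "dif B (e' (Suc n)) \<in> gcar B (p + 1)" using B.d_in[OF w1(1)] .
    have d2: "act xi (e' n) \<in> gcar B (p + 1)" using act_in[OF xi w1(2)] by (simp add: add.commute)
    have "dif B (s (Suc n)) = prj (p + 1) (dif B (e' (Suc n)))" unfolding s_def using prj_d[OF w1(1)] by simp
    moreover have "act xi (s n) = prj (p + 1) (act xi (e' n))" unfolding s_def using prj_act[OF w1(2)] by (simp add: add.commute)
    ultimately have "dif B (s (Suc n)) + act xi (s n) = prj (p + 1) (dif B (e' (Suc n)) + act xi (e' n))"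
      using prj_add[OF d1 d2] by simp
    also have "dif B (e' (Suc n)) + act xi (e' n) = 0" using e'(3) act_eta[OF w1(2)] by simp
    finally show ?thesis using prj_N[OF N0] by simp
  qed
  have s0: "s 0 = x + dif B v"
  proof -
    have dv0': "dif B v0 \<in> gcar B (p - 1 + 1)" using B.d_in[OF v0(1)] .
    have "s 0 = prj p (x + dif B v0)" unfolding s_def using e'(1) \<sigma>(1) fz by (simp add: F_def)
    also have "\<dots> = prj p x + prj p (dif B v0)" by (rule prj_add[OF xB dv0])
    also have "prj p x = x" by (rule prj_N[OF x(1)])
    also have "prj p (dif B v0) = prj (p - 1 + 1) (dif B v0)" by simp
    also have "\<dots> = dif B v" unfolding v_def by (rule prj_d[OF v0(1)])
    finally show ?thesis .
  qed
  show ?thesis using sN rel vN s0 by blast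
qed

end



theorem proposition3p16:
  fixes A :: "('k::field_char_0, 'a::ab_group_add) dga_rec"
    and B :: "('k, 'b::ab_group_add) dga_rec"
    and act :: "'a \<Rightarrow> 'b \<Rightarrow> 'b"
    and N K :: "int \<Rightarrow> 'b set"
    and xi :: 'a
  assumes "is_cdga A"
    and "dga_over A B act"
    and "is_cdga B"
    and "formal_dga TYPE('m::ab_group_add) B"
    and "dg_submodule A B act N"
    and "dg_submodule A B act K"
    and "\<forall>p. gcar B p = {x + y | x y. x \<in> N p \<and> y \<in> K p}"
    and "\<forall>p. N p \<inter> K p = {0}"
    and "xi \<in> gcar A 1"
    and "dif A xi = 0"
  shows "defo_ss_degenerates_at_2 (dif B) act N xi"
proof -
  interpret C: ctx A B act N K xi
    by (rule ctx.intro[OF assms(1,2,3,5,6,7,8,9,10)])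
  show ?thesis unfolding defo_ss_degenerates_at_2_def
  proof (intro allI impI ballI)
    fix r :: nat and p x y
    assume r: "2 \<le> r" and x: "x \<in> N p" and y: "y \<in> pser N (p + 1)" and dx: "dif B x = 0"
      and Dy: "Dt (dif B) act xi y = (\<lambda>_. 0)"
      and ex: "\<exists>u \<in> pser N p. tpow (r - 1) y - pconst (act xi x) = Dt (dif B) act xi u"
    obtain u where u: "u \<in> pser N p" "tpow (r - 1) y - pconst (act xi x) = Dt (dif B) act xi u"
      using ex by blast
    have uN: "\<And>n. u n \<in> N p" using u(1) unfolding pser_def by blast
    have H: "tpow (r - 1) y n - pconst (act xi x) n = Dt (dif B) act xi u n" for n
      using fun_cong[OF u(2), of n] by simp
    have xB: "x \<in> gcar B p" using C.N_B[OF x] .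
    have u0B: "u 0 \<in> gcar B p" using C.N_B[OF uN] .
    have "tpow (r - 1) y 0 = 0" using r unfolding tpow_def by simp
    hence "- act xi x = dif B (u 0)" using H[of 0] unfolding Dt_def pconst_def by simp
    hence ax: "act xi x = dif B (- u 0)" using C.B.d_neg[OF u0B] by (metis minus_minus)
    obtain s v where s: "\<forall>n. s n \<in> N p" "\<forall>n. dif B (s (Suc n)) + act xi (s n) = 0"
      and v: "v \<in> N (p - 1)" "s 0 = x + dif B v"
      using C.key[OF assms(4) x dx C.N_neg[OF uN] ax] by blast
    have sB: "\<And>n. s n \<in> gcar B p" using C.N_B s(1) by blast
    have vB: "v \<in> gcar B (p - 1)" using C.N_B[OF v(1)] .
    have avN: "act xi v \<in> N p" using C.N_parts(4)[OF assms(9) v(1)] by simp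
    have avB: "act xi v \<in> gcar B p" using C.N_B[OF avN] .
    have dvB: "dif B v \<in> gcar B p" using C.B.d_in[OF vB] by simp
    define u' where "u' n = u n + - s (Suc n) + pconst (act xi v) n" for n
    have u'N: "u' \<in> pser N p"
      unfolding pser_def u'_def pconst_def
      using uN s(1) avN C.N0 by (auto intro!: C.N_add C.N_neg C.N_diff)
    have pcB: "pconst (act xi v) n \<in> gcar B p" for n using avB unfolding pconst_def by auto
    have Dt_eq: "tpow (r - 1) y = Dt (dif B) act xi u'"
    proof
      fix n
      show "tpow (r - 1) y n = Dt (dif B) act xi u' n"
      proof (cases n)
        case 0
        have s1: "dif B (s 1) = - act xi (s 0)" using s(2)[rule_format, of 0] by (simp add: eq_neg_iff_add_eq_0)
        have as0: "act xi (s 0) = act xi x + act xi (dif B v)" unfolding v(2) by (rule C.act_add_r[OF assms(9) xB dvB])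
        have dav: "dif B (act xi v) = - act xi (dif B v)" by (rule C.d_act[OF vB])
        have "Dt (dif B) act xi u' 0 = dif B (u 0 + - s 1 + act xi v)"
          unfolding Dt_def u'_def pconst_def by simp
        also have "\<dots> = dif B (u 0) + - dif B (s 1) + dif B (act xi v)"
          using C.B.d_add[OF C.B.add_in[OF u0B C.B.neg_in[OF sB]] avB] C.B.d_add[OF u0B C.B.neg_in[OF sB]]
            C.B.d_neg[OF sB] by simp
        also have "\<dots> = dif B (u 0) + act xi x" unfolding s1 as0 dav by (simp add: algebra_simps)
        also have "dif B (u 0) = tpow (r - 1) y 0 - act xi x" using H[of 0] unfolding Dt_def pconst_def by simp
        finally show ?thesis using 0 by simp
      next
        case (Suc m)
        have s2: "dif B (s (Suc (Suc m))) = - act xi (s (Suc m))" using s(2)[rule_format, of "Suc m"] by (simp add: eq_neg_iff_add_eq_0)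
        have apc: "act xi (pconst (act xi v) m) = 0"
          unfolding pconst_def using C.act_sq[OF vB] C.act_zero_r[OF assms(9)] by simp
        have "Dt (dif B) act xi u' (Suc m) = dif B (u (Suc m) + - s (Suc (Suc m))) + act xi (u m + - s (Suc m) + pconst (act xi v) m)"
          unfolding Dt_def u'_def pconst_def by simp
        also have "dif B (u (Suc m) + - s (Suc (Suc m))) = dif B (u (Suc m)) + - dif B (s (Suc (Suc m)))"
          using C.B.d_add[OF C.N_B[OF uN] C.B.neg_in[OF sB]] C.B.d_neg[OF sB] by simp
        also have "act xi (u m + - s (Suc m) + pconst (act xi v) m) = act xi (u m) + - act xi (s (Suc m)) + act xi (pconst (act xi v) m)"
          using C.act_add_r[OF assms(9) C.B.add_in[OF C.N_B[OF uN] C.B.neg_in[OF sB]] pcB]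
            C.act_add_r[OF assms(9) C.N_B[OF uN] C.B.neg_in[OF sB]] C.act_neg_r[OF assms(9) sB] by simp
        also have "dif B (u (Suc m)) + - dif B (s (Suc (Suc m))) + (act xi (u m) + - act xi (s (Suc m)) + act xi (pconst (act xi v) m))
            = dif B (u (Suc m)) + act xi (u m)" unfolding s2 apc by (simp add: algebra_simps)
        also have "\<dots> = tpow (r - 1) y (Suc m)" using H[of "Suc m"] unfolding Dt_def pconst_def by simp
        finally show ?thesis using Suc by simp
      qed
    qed
    have "y 0 - y 0 = dif B 0" by simp
    thus "\<exists>w \<in> pser N (p + 1). Dt (dif B) act xi w = (\<lambda>_. 0) \<and>
           (\<exists>u \<in> pser N p. tpow (r - 1) w = Dt (dif B) act xi u) \<and>
           (\<exists>v \<in> N p. y 0 - w 0 = dif B v)"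
      using y Dy u'N Dt_eq C.N0 by blast
  qed
qed



end
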